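(* Let $k\geq 1$ and $n\geq k+2$ be integers, and let $T_n$ be any $k$-tree with $n$ vertices. Then $$\det({\sf D}^{k}(T_n))=(-1)^{k(n-k)}\,k\,(k+1)^{n-k-1}(n-k).$$
   Context: A $k$-tree is either the complete graph on $k$ vertices, or a graph obtained from a smaller $k$-tree by adding a new vertex joined by $k$ edges to all vertices of a $k$-clique (complete subgraph on $k$ vertices). In a $k$-tree $T$, for $k$-cliques $\tau,\tau'$, a $k$-walk from $\tau$ to $\tau'$ is a sequence $\tau_1\sigma_1\tau_2\sigma_2\cdots\tau_l$ with $\tau_1=\tau$, $\tau_l=\tau'$, the $\tau_i$ being $k$-cliques and $\sigma_i$ a $(k+1)$-clique containing both $\tau_i$ and $\tau_{i+1}$; the $k$-distance $\operatorname{dist}^k(\tau,\tau')$ is the number of $(k+1)$-cliques in a shortest such walk. If $T$ has $c$ $k$-cliques $\tau_1,\dots,\tau_c$ (in any fixed order), the $k$-distance matrix ${\sf D}^k(T)$ is the $c\times c$ integer matrix with $(i,j)$-entry $0$ if $i=j$ and $\operatorname{dist}^k(\tau_i,\tau_j)$ otherwise (the determinant does not depend on the chosen order). *)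

theory Defs
  imports Main "Jordan_Normal_Form.Determinant"
begin

text \<open>Simple graphs: a vertex set V and an edge set E of 2-element subsets.\<close>

definition complete_edges :: "'a set \<Rightarrow> 'a set set" where
  "complete_edges V = {{u, v} | u v. u \<in> V \<and> v \<in> V \<and> u \<noteq> v}"

definition is_clique :: "'a set \<Rightarrow> 'a set set \<Rightarrow> 'a set \<Rightarrow> bool" where
  "is_clique V E C \<longleftrightarrow> C \<subseteq> V \<and> (\<forall>u\<in>C. \<forall>v\<in>C. u \<noteq> v \<longrightarrow> {u, v} \<in> E)"

definition is_mclique :: "nat \<Rightarrow> 'a set \<Rightarrow> 'a set set \<Rightarrow> 'a set \<Rightarrow> bool" where
  "is_mclique m V E C \<longleftrightarrow> is_clique V E C \<and> finite C \<and> card C = m"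

inductive ktree :: "nat \<Rightarrow> 'a set \<Rightarrow> 'a set set \<Rightarrow> bool" for k where
  base: "finite V \<Longrightarrow> card V = k \<Longrightarrow> ktree k V (complete_edges V)"
| step: "ktree k V E \<Longrightarrow> x \<notin> V \<Longrightarrow> is_mclique k V E C \<Longrightarrow>
         ktree k (insert x V) (E \<union> {{x, c} | c. c \<in> C})"

text \<open>A k-walk from ts!0 to last ts: a sequence tau_1 sigma_1 tau_2 ... tau_l of k-cliques tau_i
  and (k+1)-cliques sigma_i with tau_i, tau_(i+1) contained in sigma_i.\<close>
definition kwalk :: "nat \<Rightarrow> 'a set \<Rightarrow> 'a set set \<Rightarrow> 'a set list \<Rightarrow> 'a set list \<Rightarrow> bool" where
  "kwalk k V E ts ss \<longleftrightarrow> ts \<noteq> [] \<and> length ss + 1 = length ts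
     \<and> (\<forall>t\<in>set ts. is_mclique k V E t) \<and> (\<forall>s\<in>set ss. is_mclique (k + 1) V E s)
     \<and> (\<forall>i<length ss. ts ! i \<subseteq> ss ! i \<and> ts ! Suc i \<subseteq> ss ! i)"

definition kdist :: "nat \<Rightarrow> 'a set \<Rightarrow> 'a set set \<Rightarrow> 'a set \<Rightarrow> 'a set \<Rightarrow> nat" where
  "kdist k V E t t' = (LEAST m. \<exists>ts ss. kwalk k V E ts ss \<and> hd ts = t \<and> last ts = t'
                                        \<and> length ss = m)"

definition kcliques :: "nat \<Rightarrow> 'a set \<Rightarrow> 'a set set \<Rightarrow> 'a set set" where
  "kcliques k V E = {C. is_mclique k V E C}"

definition kdist_matrix :: "nat \<Rightarrow> 'a set \<Rightarrow> 'a set set \<Rightarrow> 'a set list \<Rightarrow> int mat" where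
  "kdist_matrix k V E cs = mat (length cs) (length cs)
     (\<lambda>(i, j). if i = j then 0 else int (kdist k V E (cs ! i) (cs ! j)))"

end

theory Submission
  imports Defs
begin

definition sq :: "(nat \<Rightarrow> nat \<Rightarrow> int) \<Rightarrow> nat \<Rightarrow> int mat" where
  "sq f n = mat n n (\<lambda>(i,j). f i j)"

lemma sq_carrier[simp]: "sq f n \<in> carrier_mat n n"
  by (simp add: sq_def)

lemma sq_index[simp]: "i < n \<Longrightarrow> j < n \<Longrightarrow> sq f n $$ (i,j) = f i j"
  by (simp add: sq_def)

lemma sq_dim[simp]: "dim_row (sq f n) = n" "dim_col (sq f n) = n"
  by (simp_all add: sq_def)

lemma sq_cong: "(\<And>i j. i < n \<Longrightarrow> j < n \<Longrightarrow> f i j = g i j) \<Longrightarrow> sq f n = sq g n"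
  by (rule eq_matI) auto

lemma mat_delete_sq:
  "mat_delete (sq h (Suc n)) i j =
     sq (\<lambda>i' j'. h (if i' < i then i' else Suc i') (if j' < j then j' else Suc j')) n"
  by (rule eq_matI) (auto simp: mat_delete_def sq_def)

lemma det_last_col:
  assumes "\<And>i. i < n \<Longrightarrow> h i n = 0"
  shows "det (sq h (Suc n)) = h n n * det (sq h n)"
proof -
  have "det (sq h (Suc n)) = (\<Sum>i<Suc n. sq h (Suc n) $$ (i,n) * cofactor (sq h (Suc n)) i n)"
    by (rule laplace_expansion_column) auto
  also have "\<dots> = h n n * cofactor (sq h (Suc n)) n n"
    using assms by (simp add: lessThan_Suc)
  also have "cofactor (sq h (Suc n)) n n = det (sq h n)"
    unfolding cofactor_def mat_delete_sq by (simp cong: sq_cong)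
  finally show ?thesis .
qed

lemma det_perm_sim:
  assumes A: "A \<in> carrier_mat n n" and p: "p permutes {0..<n}"
  shows "det (mat n n (\<lambda>(i,j). A $$ (p i, p j))) = det A"
proof -
  define B where "B = mat n n (\<lambda>(i,j). A $$ (p i, j))"
  have B: "B \<in> carrier_mat n n" by (simp add: B_def)
  have dB: "det B = signof p * det A" unfolding B_def by (rule det_permute_rows[OF A p])
  have BT: "transpose_mat B \<in> carrier_mat n n" using B by simp
  have "det (mat n n (\<lambda>(i,j). transpose_mat B $$ (p i, j))) = signof p * det (transpose_mat B)"
    by (rule det_permute_rows[OF BT p])
  moreover have "mat n n (\<lambda>(i,j). A $$ (p i, p j)) = transpose_mat (mat n n (\<lambda>(i,j). transpose_mat B $$ (p i, j)))"
    using p by (intro eq_matI) (auto simp: B_def permutes_in_image)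
  ultimately have "det (mat n n (\<lambda>(i,j). A $$ (p i, p j))) = signof p * det (transpose_mat B)"
    using det_transpose[of "mat n n (\<lambda>(i,j). transpose_mat B $$ (p i, j))" n] by simp
  also have "\<dots> = signof p * signof p * det A" using det_transpose[OF B] dB by simp
  also have "\<dots> = det A" by (simp flip: of_int_mult)
  finally show ?thesis .
qed

lemma det_twin:
  assumes r: "\<And>j. j < a \<Longrightarrow> g (Suc a) j = g a j"
    and c: "\<And>j. j < a \<Longrightarrow> g j (Suc a) = g j a"
    and "g a (Suc a) = 1" "g (Suc a) a = 1" "g a a = 0" "g (Suc a) (Suc a) = 0"
  shows "det (sq g (Suc (Suc a))) = -2 * det (sq g (Suc a)) - det (sq g a)"
proof -
  define h where "h i j = (if i \<le> a \<and> j \<le> a then g i j else if i = Suc a \<and> j = Suc a then -2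
     else if i = Suc a \<and> j = a then 1 else if i = a \<and> j = Suc a then 1 else 0)" for i j
  define C where "C = addcol (-1) (Suc a) a (addrow (-1) (Suc a) a (sq g (Suc (Suc a))))"
  have dC: "det C = det (sq g (Suc (Suc a)))"
    unfolding C_def
    by (subst det_addcol[of a "Suc (Suc a)"], simp, simp, simp, rule det_addrow[of a "Suc (Suc a)"], auto)
  have C: "C = sq h (Suc (Suc a))"
    unfolding C_def h_def using assms
    by (intro eq_matI) (auto simp: less_Suc_eq not_less_eq_eq)
  have "det (sq h (Suc (Suc a))) = (\<Sum>j<Suc (Suc a). sq h (Suc (Suc a)) $$ (Suc a,j) * cofactor (sq h (Suc (Suc a))) (Suc a) j)"
    by (rule laplace_expansion_row) auto
  also have "\<dots> = cofactor (sq h (Suc (Suc a))) (Suc a) a - 2 * cofactor (sq h (Suc (Suc a))) (Suc a) (Suc a)"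
    by (simp add: lessThan_Suc h_def)
  also have "cofactor (sq h (Suc (Suc a))) (Suc a) (Suc a) = det (sq g (Suc a))"
    unfolding cofactor_def mat_delete_sq by (simp, intro arg_cong[where f=det] sq_cong) (auto simp: h_def)
  also have "cofactor (sq h (Suc (Suc a))) (Suc a) a = - det (sq g a)"
  proof -
    define h' where "h' i' j' = h (if i' < Suc a then i' else Suc i') (if j' < a then j' else Suc j')" for i' j'
    have "det (sq h' (Suc a)) = h' a a * det (sq h' a)"
      by (rule det_last_col) (simp add: h'_def h_def)
    also have "h' a a = 1" by (simp add: h'_def h_def)
    also have "sq h' a = sq g a" by (rule sq_cong) (simp add: h'_def h_def)
    finally have "det (sq h' (Suc a)) = det (sq g a)" by simp
    thus ?thesis unfolding cofactor_def mat_delete_sq h'_def by simp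
  qed
  finally show ?thesis using dC C by simp
qed

definition bord :: "(nat \<Rightarrow> nat \<Rightarrow> int) \<Rightarrow> nat \<Rightarrow> nat \<Rightarrow> int" where
  "bord f i j = (if i = 0 \<and> j = 0 then 0 else if i = 0 \<or> j = 0 then 1 else f (i - 1) (j - 1))"

definition cyc :: "nat \<Rightarrow> nat \<Rightarrow> nat" where
  "cyc a i = (if i = 0 then a else if i \<le> a then i - 1 else i)"

lemma cyc_permutes: "cyc a permutes {0..<Suc a}"
proof (rule bij_imp_permutes)
  show "bij_betw (cyc a) {0..<Suc a} {0..<Suc a}"
    by (rule bij_betwI[where g="\<lambda>i. if i = a then 0 else if i < a then Suc i else i"])
       (auto simp: cyc_def)
  show "\<And>x. x \<notin> {0..<Suc a} \<Longrightarrow> cyc a x = x" by (auto simp: cyc_def)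
qed

lemma det_pend:
  assumes p: "p < a"
    and r: "\<And>j. j < a \<Longrightarrow> g a j = g p j + 1"
    and c: "\<And>j. j < a \<Longrightarrow> g j a = g j p + 1"
    and "g a a = 0" "g p p = 0"
  shows "det (sq g (Suc a)) = det (sq (bord g) (Suc a)) - 2 * det (sq g a)"
proof -
  define h where "h i j = (if i < a \<and> j < a then g i j else if i = a \<and> j = a then -2 else 1)" for i j
  define h0 where "h0 i j = (if i = a \<and> j = a then 0 else h i j)" for i j
  define C where "C = addcol (-1) a p (addrow (-1) a p (sq g (Suc a)))"
  have dC: "det C = det (sq g (Suc a))"
  proof -
    have "det C = det (addrow (-1) a p (sq g (Suc a)))" unfolding C_def
      by (rule det_addcol[of p "Suc a"]) (use p in auto)
    also have "\<dots> = det (sq g (Suc a))" by (rule det_addrow[of p "Suc a"]) (use p in auto)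
    finally show ?thesis .
  qed
  have C: "C = sq h (Suc a)"
    unfolding C_def h_def using assms
    by (intro eq_matI) (auto simp: less_Suc_eq)
  have cof: "cofactor (sq h (Suc a)) a j = cofactor (sq h0 (Suc a)) a j" for j
    unfolding cofactor_def mat_delete_sq
    by (simp, intro arg_cong[where f=det] sq_cong) (auto simp: h0_def)
  have e1: "det (sq h (Suc a)) = (\<Sum>j<Suc a. sq h (Suc a) $$ (a,j) * cofactor (sq h (Suc a)) a j)"
    by (rule laplace_expansion_row) auto
  have e2: "det (sq h0 (Suc a)) = (\<Sum>j<Suc a. sq h0 (Suc a) $$ (a,j) * cofactor (sq h0 (Suc a)) a j)"
    by (rule laplace_expansion_row) auto
  have caa: "cofactor (sq h (Suc a)) a a = det (sq g a)"
    unfolding cofactor_def mat_delete_sq by (simp, intro arg_cong[where f=det] sq_cong) (auto simp: h_def)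
  have "det (sq h (Suc a)) = det (sq h0 (Suc a)) - 2 * det (sq g a)"
    unfolding e1 e2 using caa by (simp add: lessThan_Suc cof h_def h0_def)
  moreover have "det (sq h0 (Suc a)) = det (sq (bord g) (Suc a))"
  proof -
    have "sq (bord g) (Suc a) = mat (Suc a) (Suc a) (\<lambda>(i,j). sq h0 (Suc a) $$ (cyc a i, cyc a j))"
      by (rule eq_matI) (auto simp: cyc_def bord_def h0_def h_def)
    thus ?thesis using det_perm_sim[OF sq_carrier cyc_permutes] by simp
  qed
  ultimately show ?thesis using dC C by simp
qed

lemma det_pend_bord:
  assumes p: "0 < p" "p < a"
    and r: "\<And>j. 0 < j \<Longrightarrow> j < a \<Longrightarrow> h a j = h p j + 1"
    and c: "\<And>j. 0 < j \<Longrightarrow> j < a \<Longrightarrow> h j a = h j p + 1"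
    and "h a 0 = 1" "h p 0 = 1" "h 0 a = 1" "h 0 p = 1"
    and c0: "\<And>i. 0 < i \<Longrightarrow> i < a \<Longrightarrow> h i 0 = 1"
    and "h 0 0 = 0" "h a a = 0" "h p p = 0"
  shows "det (sq h (Suc a)) = - 2 * det (sq h a)"
proof -
  define h3 where "h3 i j = (if i < a \<and> j < a then h i j else if j = a then (if i = a then -2 else 0)
       else if j = 0 then 0 else 1)" for i j
  define C where "C = addcol (-1) a 0 (addcol (-1) a p (addrow (-1) a p (sq h (Suc a))))"
  have dC: "det C = det (sq h (Suc a))"
  proof -
    have "det C = det (addcol (-1) a p (addrow (-1) a p (sq h (Suc a))))" unfolding C_def
      by (rule det_addcol[of 0 "Suc a"]) (use p in auto)
    also have "\<dots> = det (addrow (-1) a p (sq h (Suc a)))"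
      by (rule det_addcol[of p "Suc a"]) (use p in auto)
    also have "\<dots> = det (sq h (Suc a))" by (rule det_addrow[of p "Suc a"]) (use p in auto)
    finally show ?thesis .
  qed
  have aux: "h i a - h i p = h i 0" if "i < a" for i
    using that assms by (cases "i = 0") auto
  have C: "C = sq h3 (Suc a)"
    unfolding C_def h3_def using assms aux
    by (intro eq_matI) (auto simp: less_Suc_eq)
  have "det (sq h3 (Suc a)) = h3 a a * det (sq h3 a)"
    by (rule det_last_col) (simp add: h3_def)
  also have "sq h3 a = sq h a" by (rule sq_cong) (simp add: h3_def)
  also have "h3 a a = -2" by (simp add: h3_def)
  finally show ?thesis using dC C by simp
qed

definition ext :: "(nat \<Rightarrow> nat \<Rightarrow> int) \<Rightarrow> nat \<Rightarrow> nat \<Rightarrow> nat \<Rightarrow> nat \<Rightarrow> int" where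
  "ext f N p i j = (if i < N \<and> j < N then f i j else if i < N then f i p + 1
     else if j < N then f p j + 1 else if i = j then 0 else 1)"

lemma block_det:
  assumes p: "p < N" and fpp: "f p p = 0"
  shows "det (sq (ext f N p) (N + m)) = (-1)^m * ((int m + 1) * det (sq f N) - int m * det (sq (bord f) (Suc N)))
       \<and> det (sq (bord (ext f N p)) (Suc (N + m))) = (-1)^m * (int m + 1) * det (sq (bord f) (Suc N))"
proof (induction m rule: less_induct)
  case (less m)
  define g where "g = ext f N p"
  define D0 where "D0 = det (sq f N)"
  define B0 where "B0 = det (sq (bord f) (Suc N))"
  have d0: "det (sq g N) = D0" unfolding D0_def g_def
    by (intro arg_cong[where f=det] sq_cong) (simp add: ext_def)
  have b0: "det (sq (bord g) (Suc N)) = B0" unfolding B0_def g_def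
    by (intro arg_cong[where f=det] sq_cong) (auto simp add: ext_def bord_def)
  show ?case
  proof (cases m)
    case 0
    then show ?thesis using d0 b0 by (simp add: g_def D0_def B0_def)
  next
    case (Suc m1)
    show ?thesis
    proof (cases m1)
      case 0
      have d1: "det (sq g (Suc N)) = B0 - 2 * D0"
        using det_pend[of p N g] p fpp d0 b0 by (simp add: g_def ext_def)
      have b1: "det (sq (bord g) (Suc (Suc N))) = -2 * B0"
        using det_pend_bord[of "Suc p" "Suc N" "bord g"] p fpp b0 by (simp add: g_def ext_def bord_def)
      show ?thesis using d1 b1 Suc 0 by (simp add: g_def D0_def B0_def algebra_simps)
    next
      case (Suc m2)
      have m: "m = Suc (Suc m2)" using \<open>m = Suc m1\<close> Suc by simp
      have IH1: "det (sq g (N + m2)) = (-1)^m2 * ((int m2 + 1) * D0 - int m2 * B0)"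
         "det (sq (bord g) (Suc (N + m2))) = (-1)^m2 * (int m2 + 1) * B0"
        using less[of m2] m by (simp_all add: g_def D0_def B0_def)
      have IH2: "det (sq g (N + Suc m2)) = (-1)^Suc m2 * ((int (Suc m2) + 1) * D0 - int (Suc m2) * B0)"
         "det (sq (bord g) (Suc (N + Suc m2))) = (-1)^Suc m2 * (int (Suc m2) + 1) * B0"
        using less[of "Suc m2"] m by (simp_all add: g_def D0_def B0_def)
      have t1: "det (sq g (Suc (Suc (N + m2)))) = -2 * det (sq g (Suc (N + m2))) - det (sq g (N + m2))"
        by (rule det_twin) (auto simp: g_def ext_def)
      have t2: "det (sq (bord g) (Suc (Suc (Suc (N + m2))))) = -2 * det (sq (bord g) (Suc (Suc (N + m2)))) - det (sq (bord g) (Suc (N + m2)))"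
        by (rule det_twin) (auto simp: g_def ext_def bord_def)
      show ?thesis using t1 t2 IH1 IH2 m unfolding g_def[symmetric] D0_def[symmetric] B0_def[symmetric]
        by (simp add: algebra_simps)
    qed
  qed
qed

lemma ktree_props: "ktree k V E \<Longrightarrow> finite V \<and> card V \<ge> k \<and> (\<forall>e\<in>E. e \<subseteq> V)"
proof (induction rule: ktree.induct)
  case (base V)
  then show ?case by (auto simp: complete_edges_def)
next
  case (step V E x C)
  then show ?case by (auto simp: is_mclique_def is_clique_def)
qed

lemma is_clique_mono: "V \<subseteq> V' \<Longrightarrow> E \<subseteq> EE \<Longrightarrow> is_clique V E S \<Longrightarrow> is_clique V' EE S"
  unfolding is_clique_def by blast

lemma is_mclique_mono: "V \<subseteq> V' \<Longrightarrow> E \<subseteq> EE \<Longrightarrow> is_mclique m V E S \<Longrightarrow> is_mclique m V' EE S"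
  unfolding is_mclique_def using is_clique_mono by blast

lemma base_mclique:
  assumes "finite V" "card V = k"
  shows "is_mclique k V (complete_edges V) S \<longleftrightarrow> S = V"
proof
  assume "is_mclique k V (complete_edges V) S"
  then have "S \<subseteq> V" "card S = k" by (auto simp: is_mclique_def is_clique_def)
  then show "S = V" using card_subset_eq[OF assms(1), of S] assms(2) by simp
next
  assume "S = V"
  then show "is_mclique k V (complete_edges V) S"
    using assms by (auto simp: is_mclique_def is_clique_def complete_edges_def)
qed

lemma base_no_mclique1:
  assumes "finite V" "card V = k"
  shows "\<not> is_mclique (Suc k) V (complete_edges V) S"
proof
  assume "is_mclique (Suc k) V (complete_edges V) S"
  then have "S \<subseteq> V" "card S = Suc k" by (auto simp: is_mclique_def is_clique_def)
  then show False using card_mono[OF assms(1), of S] assms(2) by simp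
qed

context
  fixes k :: nat and V :: "'a set" and E :: "'a set set" and x :: 'a and C :: "'a set"
  assumes xV: "x \<notin> V" and EV: "\<forall>e\<in>E. e \<subseteq> V" and C: "is_mclique k V E C"
begin

lemma CV: "C \<subseteq> V" using C by (auto simp: is_mclique_def is_clique_def)
lemma xC: "x \<notin> C" using CV xV by auto
lemma finC: "finite C" "card C = k" using C by (auto simp: is_mclique_def)

abbreviation "EE \<equiv> E \<union> {{x, c} | c. c \<in> C}"

lemma step_clique:
  "is_clique (insert x V) EE S \<longleftrightarrow> (x \<notin> S \<and> is_clique V E S) \<or> (x \<in> S \<and> S - {x} \<subseteq> C)"
proof
  assume cl: "is_clique (insert x V) EE S"
  show "(x \<notin> S \<and> is_clique V E S) \<or> (x \<in> S \<and> S - {x} \<subseteq> C)"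
  proof (cases "x \<in> S")
    case True
    have "u \<in> C" if "u \<in> S" "u \<noteq> x" for u
    proof -
      have "{x, u} \<in> EE" using cl True that unfolding is_clique_def by auto
      moreover have "{x, u} \<notin> E" using EV xV by auto
      ultimately obtain c where "c \<in> C" "{x, u} = {x, c}" by auto
      then show ?thesis using that by (auto simp: doubleton_eq_iff)
    qed
    then show ?thesis using True by auto
  next
    case False
    have "S \<subseteq> V" using cl False unfolding is_clique_def by auto
    moreover have "{u, v} \<in> E" if "u \<in> S" "v \<in> S" "u \<noteq> v" for u v
    proof -
      have "{u, v} \<in> EE" using cl that unfolding is_clique_def by auto
      moreover have "{u, v} \<noteq> {x, c}" for c using False that by (auto simp: doubleton_eq_iff)
      ultimately show ?thesis by auto
    qed
    ultimately show ?thesis using False unfolding is_clique_def by auto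
  qed
next
  assume "(x \<notin> S \<and> is_clique V E S) \<or> (x \<in> S \<and> S - {x} \<subseteq> C)"
  then show "is_clique (insert x V) EE S"
  proof
    assume "x \<notin> S \<and> is_clique V E S"
    then show ?thesis using is_clique_mono[of V "insert x V" E EE S] by auto
  next
    assume a: "x \<in> S \<and> S - {x} \<subseteq> C"
    have "S \<subseteq> insert x V" using a CV by auto
    moreover have "{u, v} \<in> EE" if "u \<in> S" "v \<in> S" "u \<noteq> v" for u v
    proof (cases "u = x \<or> v = x")
      case True
      then show ?thesis using a that by (auto simp: insert_commute)
    next
      case False
      then have "u \<in> C" "v \<in> C" using a that by auto
      then show ?thesis using C that unfolding is_mclique_def is_clique_def by auto
    qed
    ultimately show ?thesis unfolding is_clique_def by auto
  qed
qed

lemma step_mclique: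
  "is_mclique m (insert x V) EE S \<longleftrightarrow> (x \<notin> S \<and> is_mclique m V E S) \<or> (x \<in> S \<and> S - {x} \<subseteq> C \<and> card S = m)"
proof -
  have "finite S" if "x \<in> S" "S - {x} \<subseteq> C"
    using that finC(1) by (metis finite_Diff2 finite_subset finite.emptyI finite_insert)
  then show ?thesis unfolding is_mclique_def step_clique by blast
qed

definition nu :: "'a \<Rightarrow> 'a set" where "nu c = insert x (C - {c})"

lemma nu_clique: "c \<in> C \<Longrightarrow> k \<ge> 1 \<Longrightarrow> is_mclique k (insert x V) EE (nu c)"
  unfolding step_mclique nu_def using finC xC
  by (auto simp: card_insert_if)

lemma nu_inj: "c \<in> C \<Longrightarrow> c' \<in> C \<Longrightarrow> nu c = nu c' \<Longrightarrow> c = c'"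
proof -
  assume a: "c \<in> C" "c' \<in> C" "nu c = nu c'"
  have "c \<notin> nu c" using a xC by (auto simp: nu_def)
  then have "c \<notin> nu c'" using a by simp
  then show "c = c'" using a xC by (auto simp: nu_def)
qed

lemma x_nu: "x \<in> nu c" by (simp add: nu_def)

lemma new_kclique:
  assumes "k \<ge> 1"
  shows "is_mclique k (insert x V) EE S \<longleftrightarrow> is_mclique k V E S \<or> (\<exists>c\<in>C. S = nu c)"
proof
  assume "is_mclique k (insert x V) EE S"
  then consider "x \<notin> S \<and> is_mclique k V E S" | "x \<in> S" "S - {x} \<subseteq> C" "card S = k"
    unfolding step_mclique by blast
  then show "is_mclique k V E S \<or> (\<exists>c\<in>C. S = nu c)"
  proof cases
    case 2
    have fS: "finite (S - {x})" using 2 finC finite_subset by blast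
    have cS: "card (S - {x}) = k - 1" using 2 fS by simp
    then have "S - {x} \<noteq> C" using finC assms by auto
    then obtain c where c: "c \<in> C" "c \<notin> S - {x}" using 2 by auto
    then have sub: "S - {x} \<subseteq> C - {c}" using 2 by auto
    have "card (C - {c}) = k - 1" using c finC by simp
    then have "S - {x} = C - {c}" using card_subset_eq[OF _ sub] finC cS by auto
    then have "S = nu c" using 2 unfolding nu_def by auto
    then show ?thesis using c by auto
  qed auto
next
  assume "is_mclique k V E S \<or> (\<exists>c\<in>C. S = nu c)"
  then show "is_mclique k (insert x V) EE S"
    using nu_clique assms is_mclique_mono[of V "insert x V" E EE] by blast
qed

lemma new_k1clique:
  "is_mclique (Suc k) (insert x V) EE S \<longleftrightarrow> is_mclique (Suc k) V E S \<or> S = insert x C"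
proof
  assume "is_mclique (Suc k) (insert x V) EE S"
  then consider "x \<notin> S \<and> is_mclique (Suc k) V E S" | "x \<in> S" "S - {x} \<subseteq> C" "card S = Suc k"
    unfolding step_mclique by blast
  then show "is_mclique (Suc k) V E S \<or> S = insert x C"
  proof cases
    case 2
    have fS: "finite (S - {x})" using 2 finC finite_subset by blast
    have cS: "card (S - {x}) = k" using 2 fS by simp
    then have "S - {x} = C" using card_subset_eq[OF _ 2(2)] finC by auto
    then show ?thesis using 2 by auto
  qed auto
next
  assume "is_mclique (Suc k) V E S \<or> S = insert x C"
  then show "is_mclique (Suc k) (insert x V) EE S"
  proof
    assume "S = insert x C"
    then show ?thesis unfolding step_mclique using xC finC by auto
  qed (use is_mclique_mono[of V "insert x V" E EE] in blast)
qed

end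

lemma kwalk_single: "is_mclique k V E t \<Longrightarrow> kwalk k V E [t] []"
  by (simp add: kwalk_def)

lemma kwalk_cons:
  assumes w: "kwalk k V E ts ss" and "is_mclique k V E t" "is_mclique (k+1) V E s" "t \<subseteq> s" "hd ts \<subseteq> s"
  shows "kwalk k V E (t # ts) (s # ss)"
proof -
  have ne: "ts \<noteq> []" using w by (simp add: kwalk_def)
  have "(t # ts) ! i \<subseteq> (s # ss) ! i \<and> (t # ts) ! Suc i \<subseteq> (s # ss) ! i" if "i < Suc (length ss)" for i
  proof (cases i)
    case 0
    then show ?thesis using assms ne by (simp add: hd_conv_nth)
  next
    case (Suc j)
    then show ?thesis using w that by (simp add: kwalk_def)
  qed
  then show ?thesis using w assms unfolding kwalk_def by auto
qed

lemma kwalk_snoc: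
  assumes w: "kwalk k V E ts ss" and "is_mclique k V E t" "is_mclique (k+1) V E s" "t \<subseteq> s" "last ts \<subseteq> s"
  shows "kwalk k V E (ts @ [t]) (ss @ [s])"
proof -
  have ne: "ts \<noteq> []" and len: "length ss + 1 = length ts" using w by (auto simp: kwalk_def)
  have "(ts @ [t]) ! i \<subseteq> (ss @ [s]) ! i \<and> (ts @ [t]) ! Suc i \<subseteq> (ss @ [s]) ! i" if "i < Suc (length ss)" for i
  proof (cases "i < length ss")
    case True
    then show ?thesis using w len by (simp add: kwalk_def nth_append)
  next
    case False
    then have i: "i = length ss" using that by simp
    have "ts ! length ss = last ts" using ne len by (metis last_conv_nth add_diff_cancel_right')
    then show ?thesis using i len assms by (simp add: nth_append)
  qed
  then show ?thesis using w assms unfolding kwalk_def by auto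
qed

lemma kwalk_mono: "V \<subseteq> V' \<Longrightarrow> E \<subseteq> E' \<Longrightarrow> kwalk k V E ts ss \<Longrightarrow> kwalk k V' E' ts ss"
  unfolding kwalk_def using is_mclique_mono by blast

lemma kdist_le: "kwalk k V E ts ss \<Longrightarrow> hd ts = a \<Longrightarrow> last ts = b \<Longrightarrow> kdist k V E a b \<le> length ss"
  unfolding kdist_def by (rule Least_le) blast

lemma kdist_attained:
  assumes "kwalk k V E ts ss" "hd ts = a" "last ts = b"
  shows "\<exists>ts ss. kwalk k V E ts ss \<and> hd ts = a \<and> last ts = b \<and> length ss = kdist k V E a b"
  unfolding kdist_def by (rule LeastI_ex) (use assms in blast)

definition lip :: "nat \<Rightarrow> 'a set \<Rightarrow> 'a set set \<Rightarrow> ('a set \<Rightarrow> int) \<Rightarrow> bool" where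
  "lip k V E h \<longleftrightarrow> (\<forall>s t1 t2. is_mclique (k+1) V E s \<longrightarrow> is_mclique k V E t1 \<longrightarrow> is_mclique k V E t2
      \<longrightarrow> t1 \<subseteq> s \<longrightarrow> t2 \<subseteq> s \<longrightarrow> h t1 - h t2 \<le> 1)"

lemma walk_lip:
  assumes w: "kwalk k V E ts ss" and l: "lip k V E h"
  shows "h (hd ts) - h (last ts) \<le> int (length ss)"
proof -
  have ne: "ts \<noteq> []" and len: "length ss + 1 = length ts" using w by (auto simp: kwalk_def)
  have "h (ts ! 0) - h (ts ! i) \<le> int i" if "i \<le> length ss" for i
    using that
  proof (induction i)
    case 0
    then show ?case by simp
  next
    case (Suc i)
    have i: "i < length ss" using Suc by simp
    have s: "is_mclique (k+1) V E (ss ! i)" using w i unfolding kwalk_def by auto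
    have t1: "is_mclique k V E (ts ! i)" "is_mclique k V E (ts ! Suc i)"
      using w i len unfolding kwalk_def by auto
    have "ts ! i \<subseteq> ss ! i" "ts ! Suc i \<subseteq> ss ! i" using w i unfolding kwalk_def by auto
    then have "h (ts ! i) - h (ts ! Suc i) \<le> 1"
      using l s t1 unfolding lip_def by blast
    then show ?case using Suc by simp
  qed
  from this[of "length ss"] have "h (ts ! 0) - h (ts ! length ss) \<le> int (length ss)" by simp
  moreover have "ts ! length ss = last ts" using ne len by (metis last_conv_nth add_diff_cancel_right')
  ultimately show ?thesis using ne by (simp add: hd_conv_nth)
qed

lemma kdist_lip:
  assumes "kwalk k V E ts ss" "hd ts = a" "last ts = b" "lip k V E h"
  shows "h a - h b \<le> int (kdist k V E a b)"
  using kdist_attained[OF assms(1-3)] walk_lip assms(4) by metis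

lemma kdist_refl: "is_mclique k V E a \<Longrightarrow> kdist k V E a a = 0"
  using kdist_le[OF kwalk_single, of k V E a a a] by simp

definition conn :: "nat \<Rightarrow> 'a set \<Rightarrow> 'a set set \<Rightarrow> bool" where
  "conn k V E \<longleftrightarrow> (\<forall>a b. is_mclique k V E a \<longrightarrow> is_mclique k V E b \<longrightarrow>
      (\<exists>ts ss. kwalk k V E ts ss \<and> hd ts = a \<and> last ts = b))"

lemma tri1:
  assumes "conn k V E" "is_mclique k V E t1" "is_mclique k V E t2" "is_mclique (k+1) V E s"
    "t1 \<subseteq> s" "t2 \<subseteq> s" "is_mclique k V E b"
  shows "kdist k V E t1 b \<le> kdist k V E t2 b + 1"
proof -
  obtain ts ss where w: "kwalk k V E ts ss" "hd ts = t2" "last ts = b" "length ss = kdist k V E t2 b"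
    using assms(1,3,7) kdist_attained unfolding conn_def by metis
  have "kwalk k V E (t1 # ts) (s # ss)" by (rule kwalk_cons) (use w assms in auto)
  moreover have "ts \<noteq> []" using w by (simp add: kwalk_def)
  ultimately have "kdist k V E t1 b \<le> length (s # ss)"
    using kdist_le[of k V E "t1 # ts" "s # ss" t1 b] w by simp
  then show ?thesis using w by simp
qed

lemma tri2:
  assumes "conn k V E" "is_mclique k V E t1" "is_mclique k V E t2" "is_mclique (k+1) V E s"
    "t1 \<subseteq> s" "t2 \<subseteq> s" "is_mclique k V E b"
  shows "kdist k V E b t1 \<le> kdist k V E b t2 + 1"
proof -
  obtain ts ss where w: "kwalk k V E ts ss" "hd ts = b" "last ts = t2" "length ss = kdist k V E b t2"
    using assms(1,3,7) kdist_attained unfolding conn_def by metis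
  have w2: "kwalk k V E (ts @ [t1]) (ss @ [s])" by (rule kwalk_snoc) (use w assms in auto)
  have "hd (ts @ [t1]) = b" using w by (cases ts) (auto simp: kwalk_def)
  then have "kdist k V E b t1 \<le> length (ss @ [s])"
    using kdist_le[OF w2] by simp
  then show ?thesis using w by simp
qed

lemma lip_to:
  assumes "conn k V E" "is_mclique k V E b"
  shows "lip k V E (\<lambda>t. int (kdist k V E t b))"
  unfolding lip_def using tri1[OF assms(1) _ _ _ _ _ assms(2)] by fastforce

lemma lip_from:
  assumes "conn k V E" "is_mclique k V E b"
  shows "lip k V E (\<lambda>t. - int (kdist k V E b t))"
  unfolding lip_def using tri2[OF assms(1) _ _ _ _ _ assms(2)] by fastforce

context
  fixes k :: nat and V :: "'a set" and E :: "'a set set" and x :: 'a and C :: "'a set"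
  assumes k1: "k \<ge> 1" and xV: "x \<notin> V" and EV: "\<forall>e\<in>E. e \<subseteq> V" and C: "is_mclique k V E C"
    and cn: "conn k V E"
begin

abbreviation "V2 \<equiv> insert x V"
abbreviation "E2 \<equiv> E \<union> {{x, c} | c. c \<in> C}"

lemma nu_eq: "nu x C c = insert x (C - {c})" using nu_def[OF xV EV C] .
lemma xnu: "x \<in> nu x C c" by (simp add: nu_eq)

lemma Lk: "is_mclique k V2 E2 S \<longleftrightarrow> is_mclique k V E S \<or> (\<exists>c\<in>C. S = nu x C c)"
  using new_kclique[OF xV EV C k1] .

lemma Lk1: "is_mclique (Suc k) V2 E2 S \<longleftrightarrow> is_mclique (Suc k) V E S \<or> S = insert x C"
  using new_k1clique[OF xV EV C] .

lemma xnot: "is_mclique m V E S \<Longrightarrow> x \<notin> S"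
  using xV by (auto simp: is_mclique_def is_clique_def)

lemma sig: "is_mclique (Suc k) V2 E2 (insert x C)" using Lk1 by simp

lemma nu_sub: "nu x C c \<subseteq> insert x C" by (auto simp: nu_eq)

lemma nuk: "c \<in> C \<Longrightarrow> is_mclique k V2 E2 (nu x C c)" using Lk by blast

lemma oldk: "is_mclique m V E S \<Longrightarrow> is_mclique m V2 E2 S"
  by (rule is_mclique_mono[of V V2 E E2]) auto

lemma lip_lift:
  assumes l: "lip k V E \<phi>" and d: "\<bar>\<delta>\<bar> \<le> 1"
  shows "lip k V2 E2 (\<lambda>t. if x \<in> t then \<phi> C + \<delta> else \<phi> t)"
  unfolding lip_def
proof (intro allI impI)
  fix s t1 t2
  assume s: "is_mclique (k+1) V2 E2 s" and t1: "is_mclique k V2 E2 t1" and t2: "is_mclique k V2 E2 t2"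
    and sub: "t1 \<subseteq> s" "t2 \<subseteq> s"
  from s consider "is_mclique (Suc k) V E s" | "s = insert x C" using Lk1 by auto
  then show "(if x \<in> t1 then \<phi> C + \<delta> else \<phi> t1) - (if x \<in> t2 then \<phi> C + \<delta> else \<phi> t2) \<le> 1"
  proof cases
    case 1
    then have "x \<notin> s" by (rule xnot)
    then have "x \<notin> t1" "x \<notin> t2" using sub by auto
    then have "is_mclique k V E t1" "is_mclique k V E t2" using t1 t2 Lk xnu by blast+
    then show ?thesis using l 1 sub \<open>x \<notin> t1\<close> \<open>x \<notin> t2\<close> unfolding lip_def by simp
  next
    case 2
    have eqC: "t = C" if "t \<subseteq> insert x C" "x \<notin> t" "is_mclique k V2 E2 t" for t
    proof -
      have "t \<subseteq> C" using that by auto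
      moreover have "card t = card C" using that finC[OF xV EV C] by (auto simp: is_mclique_def)
      ultimately show ?thesis using card_subset_eq finC(1)[OF xV EV C] by metis
    qed
    show ?thesis using eqC[OF _ _ t1] eqC[OF _ _ t2] sub 2 d by auto
  qed
qed

lemma conn_new: "conn k V2 E2"
  unfolding conn_def
proof (intro allI impI)
  fix a b assume a: "is_mclique k V2 E2 a" and b: "is_mclique k V2 E2 b"
  have Cc: "is_mclique k V E C" by (rule C)
  show "\<exists>ts ss. kwalk k V2 E2 ts ss \<and> hd ts = a \<and> last ts = b"
  proof (cases "is_mclique k V E a")
    case aold: True
    show ?thesis
    proof (cases "is_mclique k V E b")
      case True
      then obtain ts ss where "kwalk k V E ts ss" "hd ts = a" "last ts = b" using cn aold unfolding conn_def by blast
      then show ?thesis using kwalk_mono[of V V2 E E2] by blast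
    next
      case False
      then obtain c where c: "c \<in> C" "b = nu x C c" using b Lk by blast
      obtain ts ss where w: "kwalk k V E ts ss" "hd ts = a" "last ts = C" using cn aold Cc unfolding conn_def by blast
      have "kwalk k V2 E2 (ts @ [b]) (ss @ [insert x C])"
        by (rule kwalk_snoc) (use w kwalk_mono[of V V2 E E2] c b sig nu_sub in auto)
      moreover have "hd (ts @ [b]) = a" using w by (cases ts) (auto simp: kwalk_def)
      ultimately show ?thesis by force
    qed
  next
    case False
    then obtain c where c: "c \<in> C" "a = nu x C c" using a Lk by blast
    show ?thesis
    proof (cases "is_mclique k V E b")
      case True
      obtain ts ss where w: "kwalk k V E ts ss" "hd ts = C" "last ts = b" using cn True Cc unfolding conn_def by blast
      have ne: "ts \<noteq> []" using w by (simp add: kwalk_def)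
      have "kwalk k V2 E2 (a # ts) (insert x C # ss)"
        by (rule kwalk_cons) (use w kwalk_mono[of V V2 E E2] c a sig nu_sub in auto)
      then show ?thesis using w ne by force
    next
      case False
      then obtain c' where c': "c' \<in> C" "b = nu x C c'" using b Lk by blast
      have "kwalk k V2 E2 [a, b] [insert x C]"
        using a b sig c c' nu_sub unfolding kwalk_def by auto
      then show ?thesis by force
    qed
  qed
qed

lemma conn_short: "conn k' V' E' \<Longrightarrow> is_mclique k' V' E' a \<Longrightarrow> is_mclique k' V' E' b \<Longrightarrow>
   \<exists>ts ss. kwalk k' V' E' ts ss \<and> hd ts = a \<and> last ts = b \<and> length ss = kdist k' V' E' a b"
  unfolding conn_def using kdist_attained by blast

lemma conn_any: "conn k' V' E' \<Longrightarrow> is_mclique k' V' E' a \<Longrightarrow> is_mclique k' V' E' b \<Longrightarrow>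
   \<exists>ts ss. kwalk k' V' E' ts ss \<and> hd ts = a \<and> last ts = b"
  unfolding conn_def by blast

lemma d_old:
  assumes a: "is_mclique k V E a" and b: "is_mclique k V E b"
  shows "kdist k V2 E2 a b = kdist k V E a b"
proof (rule antisym)
  obtain ts ss where w: "kwalk k V E ts ss" "hd ts = a" "last ts = b" "length ss = kdist k V E a b"
    using conn_short[OF cn a b] by blast
  show "kdist k V2 E2 a b \<le> kdist k V E a b"
    using kdist_le[OF kwalk_mono[OF _ _ w(1)] w(2,3), of V2 E2] w(4) by auto
next
  obtain ts ss where w: "kwalk k V2 E2 ts ss" "hd ts = a" "last ts = b"
    using conn_any[OF conn_new oldk[OF a] oldk[OF b]] by blast
  have l: "lip k V2 E2 (\<lambda>t. if x \<in> t then int (kdist k V E C b) + 0 else int (kdist k V E t b))"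
    by (rule lip_lift[OF lip_to[OF cn b]]) simp
  have "int (kdist k V E a b) - int (kdist k V E b b) \<le> int (kdist k V2 E2 a b)"
    using kdist_lip[OF w l] xnot[OF a] xnot[OF b] by simp
  then show "kdist k V E a b \<le> kdist k V2 E2 a b" using kdist_refl[OF b] by simp
qed

lemma d_new_old:
  assumes c: "c \<in> C" and b: "is_mclique k V E b"
  shows "kdist k V2 E2 (nu x C c) b = kdist k V E C b + 1"
proof (rule antisym)
  obtain ts ss where w: "kwalk k V E ts ss" "hd ts = C" "last ts = b" "length ss = kdist k V E C b"
    using conn_short[OF cn C b] by blast
  have ne: "ts \<noteq> []" using w by (simp add: kwalk_def)
  have "kwalk k V2 E2 (nu x C c # ts) (insert x C # ss)"
    by (rule kwalk_cons) (use w kwalk_mono[of V V2 E E2] c nuk sig nu_sub in auto)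
  then show "kdist k V2 E2 (nu x C c) b \<le> kdist k V E C b + 1"
    using kdist_le[of k V2 E2 "nu x C c # ts" "insert x C # ss"] w ne by simp
next
  obtain ts ss where w: "kwalk k V2 E2 ts ss" "hd ts = nu x C c" "last ts = b"
    using conn_any[OF conn_new nuk[OF c] oldk[OF b]] by blast
  have l: "lip k V2 E2 (\<lambda>t. if x \<in> t then int (kdist k V E C b) + 1 else int (kdist k V E t b))"
    by (rule lip_lift[OF lip_to[OF cn b]]) simp
  have "int (kdist k V E C b) + 1 - int (kdist k V E b b) \<le> int (kdist k V2 E2 (nu x C c) b)"
    using kdist_lip[OF w l] xnot[OF b] xnu by simp
  then show "kdist k V E C b + 1 \<le> kdist k V2 E2 (nu x C c) b" using kdist_refl[OF b] by simp
qed

lemma d_old_new: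
  assumes c: "c \<in> C" and a: "is_mclique k V E a"
  shows "kdist k V2 E2 a (nu x C c) = kdist k V E a C + 1"
proof (rule antisym)
  obtain ts ss where w: "kwalk k V E ts ss" "hd ts = a" "last ts = C" "length ss = kdist k V E a C"
    using conn_short[OF cn a C] by blast
  have w2: "kwalk k V2 E2 (ts @ [nu x C c]) (ss @ [insert x C])"
    by (rule kwalk_snoc) (use w kwalk_mono[of V V2 E E2] c nuk sig nu_sub in auto)
  have "hd (ts @ [nu x C c]) = a" using w by (cases ts) (auto simp: kwalk_def)
  then show "kdist k V2 E2 a (nu x C c) \<le> kdist k V E a C + 1"
    using kdist_le[OF w2] w by simp
next
  obtain ts ss where w: "kwalk k V2 E2 ts ss" "hd ts = a" "last ts = nu x C c"
    using conn_any[OF conn_new oldk[OF a] nuk[OF c]] by blast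
  have l: "lip k V2 E2 (\<lambda>t. if x \<in> t then - int (kdist k V E a C) + (-1) else - int (kdist k V E a t))"
    by (rule lip_lift[OF lip_from[OF cn a]]) simp
  have "- int (kdist k V E a a) - (- int (kdist k V E a C) + (-1)) \<le> int (kdist k V2 E2 a (nu x C c))"
    using kdist_lip[OF w l] xnot[OF a] xnu by simp
  then show "kdist k V E a C + 1 \<le> kdist k V2 E2 a (nu x C c)" using kdist_refl[OF a] by simp
qed

lemma d_new_new:
  assumes c: "c \<in> C" and c': "c' \<in> C" and ne: "c \<noteq> c'"
  shows "kdist k V2 E2 (nu x C c) (nu x C c') = 1"
proof (rule antisym)
  have w: "kwalk k V2 E2 [nu x C c, nu x C c'] [insert x C]"
    using nuk c c' sig nu_sub unfolding kwalk_def by auto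
  show "kdist k V2 E2 (nu x C c) (nu x C c') \<le> 1" using kdist_le[OF w] by simp
  have neq: "nu x C c \<noteq> nu x C c'" using nu_inj[OF xV EV C c c'] ne by blast
  have l: "lip k V2 E2 (\<lambda>t. if t = nu x C c then 1 else 0)" unfolding lip_def by simp
  have "(\<lambda>t. if t = nu x C c then 1 else 0) (nu x C c) - (\<lambda>t. if t = nu x C c then 1 else 0) (nu x C c')
     \<le> int (kdist k V2 E2 (nu x C c) (nu x C c'))"
    by (rule kdist_lip[OF w _ _ l]) simp_all
  moreover have "nu x C c' \<noteq> nu x C c" using neq by metis
  ultimately have "1 \<le> int (kdist k V2 E2 (nu x C c) (nu x C c'))" by simp
  then show "1 \<le> kdist k V2 E2 (nu x C c) (nu x C c')" by linarith
qed

end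

definition ent :: "nat \<Rightarrow> 'a set \<Rightarrow> 'a set set \<Rightarrow> 'a set \<Rightarrow> 'a set \<Rightarrow> int" where
  "ent k V E a b = (if a = b then 0 else int (kdist k V E a b))"

lemma kdm: "distinct L \<Longrightarrow> kdist_matrix k V E L = sq (\<lambda>i j. ent k V E (L!i) (L!j)) (length L)"
  unfolding kdist_matrix_def sq_def ent_def
  by (rule eq_matI) (auto simp: nth_eq_iff_index_eq)

lemma list_perm:
  fixes F :: "'b \<Rightarrow> 'b \<Rightarrow> int"
  assumes d1: "distinct L1" and d2: "distinct L2" and s: "set L1 = set L2"
  shows "det (sq (\<lambda>i j. F (L1!i) (L1!j)) (length L1)) = det (sq (\<lambda>i j. F (L2!i) (L2!j)) (length L2))"
proof -
  have "mset L1 = mset L2" using d1 d2 s by (metis mset_set_set)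
  then obtain p where p: "p permutes {..<length L2}" "permute_list p L2 = L1"
    by (rule mset_eq_permutation)
  have len: "length L1 = length L2" using p(2) by (metis length_permute_list)
  have nth: "L1 ! i = L2 ! p i" if "i < length L2" for i
    using permute_list_nth[OF p(1) that] p(2) by simp
  have pin: "p i < length L2" if "i < length L2" for i
    using permutes_in_image[OF p(1)] that by simp
  have p0: "p permutes {0..<length L2}" using p(1) by (simp add: atLeast0LessThan)
  have "sq (\<lambda>i j. F (L1!i) (L1!j)) (length L1) =
        mat (length L2) (length L2) (\<lambda>(i,j). sq (\<lambda>i j. F (L2!i) (L2!j)) (length L2) $$ (p i, p j))"
    by (rule eq_matI) (auto simp: len nth pin)
  then show ?thesis using det_perm_sim[OF sq_carrier p0] by simp
qed

definition G :: "('b \<Rightarrow> 'b \<Rightarrow> int) \<Rightarrow> 'b option \<Rightarrow> 'b option \<Rightarrow> int" where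
  "G F a b = (case a of None \<Rightarrow> (case b of None \<Rightarrow> 0 | Some _ \<Rightarrow> 1)
      | Some a' \<Rightarrow> (case b of None \<Rightarrow> 1 | Some b' \<Rightarrow> F a' b'))"

lemma bord_list:
  "sq (bord (\<lambda>i j. F (L!i) (L!j))) (Suc (length L)) =
   sq (\<lambda>i j. G F ((None # map Some L) ! i) ((None # map Some L) ! j)) (length (None # map Some L))"
  by (rule sq_cong[THEN trans], rule refl, simp, rule sq_cong)
     (auto simp: bord_def G_def nth_Cons' )

lemma bord_perm:
  fixes F :: "'b \<Rightarrow> 'b \<Rightarrow> int"
  assumes d1: "distinct L1" and d2: "distinct L2" and s: "set L1 = set L2"
  shows "det (sq (bord (\<lambda>i j. F (L1!i) (L1!j))) (Suc (length L1))) =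
         det (sq (bord (\<lambda>i j. F (L2!i) (L2!j))) (Suc (length L2)))"
  unfolding bord_list
  by (rule list_perm) (use d1 d2 s in \<open>auto simp: distinct_map\<close>)

definition dform :: "nat \<Rightarrow> nat \<Rightarrow> int" where
  "dform k b = (-1) ^ (k * b) * int k * (int k + 1) ^ (b - 1) * int b"
definition bform :: "nat \<Rightarrow> nat \<Rightarrow> int" where
  "bform k b = - ((-1) ^ (k * b) * (int k + 1) ^ b)"

lemma dform_step: "(-1)^k * ((int k + 1) * dform k b - int k * bform k b) = dform k (Suc b)"
proof (cases b)
  case 0
  then show ?thesis by (simp add: dform_def bform_def)
next
  case (Suc b')
  then show ?thesis by (simp add: dform_def bform_def power_add algebra_simps)
qed

lemma bform_step: "(-1)^k * (int k + 1) * bform k b = bform k (Suc b)"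
  by (simp add: bform_def power_add algebra_simps)

lemma det0: "det (sq h 0) = 1"
  by (simp add: det_def sq_def)

lemma det1: "det (sq h 1) = h 0 0"
  using det_last_col[of 0 h] det0 by simp

lemma det2: "det (sq h 2) = h 0 0 * h 1 1 - h 0 1 * h 1 0"
proof -
  have "det (sq h 2) = (\<Sum>j<2. sq h 2 $$ (1,j) * cofactor (sq h 2) 1 j)"
    by (rule laplace_expansion_row) auto
  also have "\<dots> = h 1 0 * cofactor (sq h 2) 1 0 + h 1 1 * cofactor (sq h 2) 1 1"
    by (simp add: numeral_2_eq_2 lessThan_Suc)
  also have "cofactor (sq h 2) 1 0 = - h 0 1"
    unfolding cofactor_def numeral_2_eq_2 mat_delete_sq by (simp add: det1[unfolded One_nat_def])
  also have "cofactor (sq h 2) 1 1 = h 0 0"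
    unfolding cofactor_def numeral_2_eq_2 mat_delete_sq by (simp add: det1[unfolded One_nat_def])
  finally show ?thesis by simp
qed

lemma kcliques_fin: "ktree k V E \<Longrightarrow> finite (kcliques k V E)"
proof -
  assume "ktree k V E"
  then have "finite V" using ktree_props by blast
  moreover have "kcliques k V E \<subseteq> Pow V" by (auto simp: kcliques_def is_mclique_def is_clique_def)
  ultimately show ?thesis by (meson finite_Pow_iff finite_subset)
qed

lemma main_ind:
  assumes "ktree k V E" "k \<ge> 1"
  shows "conn k V E \<and> (\<forall>L. distinct L \<and> set L = kcliques k V E \<longrightarrow>
     det (sq (\<lambda>i j. ent k V E (L!i) (L!j)) (length L)) = dform k (card V - k) \<and>
     det (sq (bord (\<lambda>i j. ent k V E (L!i) (L!j))) (Suc (length L))) = bform k (card V - k))"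
  using assms
proof (induction rule: ktree.induct)
  case (base V)
  have bm: "is_mclique k V (complete_edges V) S \<longleftrightarrow> S = V" for S using base_mclique[OF base(1,2)] .
  have kc: "kcliques k V (complete_edges V) = {V}" using bm by (auto simp: kcliques_def)
  have cn: "conn k V (complete_edges V)"
    unfolding conn_def bm using kwalk_single[of k V "complete_edges V" V] bm by force
  show ?case
  proof (intro conjI allI impI cn)
    fix L :: "'a set list" assume L: "distinct L \<and> set L = kcliques k V (complete_edges V)"
    then have "length L = 1" using distinct_card[of L] kc by simp
    then obtain y where "L = [y]" by (metis One_nat_def length_0_conv length_Suc_conv)
    then have L1: "L = [V]" using L kc by simp
    show "det (sq (\<lambda>i j. ent k V (complete_edges V) (L!i) (L!j)) (length L)) = dform k (card V - k)"
      unfolding L1 using det1 base(2) by (simp add: ent_def dform_def)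
    show "det (sq (bord (\<lambda>i j. ent k V (complete_edges V) (L!i) (L!j))) (Suc (length L))) = bform k (card V - k)"
      unfolding L1 using det2 base(2) by (simp add: ent_def bform_def bord_def numeral_2_eq_2)
  qed
next
  case (step V E x C)
  have k1: "1 \<le> k" by fact
  have xV: "x \<notin> V" and C: "is_mclique k V E C" by fact+
  have kt: "ktree k V E" by fact
  have props: "finite V" "card V \<ge> k" "\<forall>e\<in>E. e \<subseteq> V" using ktree_props[OF kt] by auto
  note EV = props(3)
  have cn: "conn k V E" and IH: "\<And>L. distinct L \<Longrightarrow> set L = kcliques k V E \<Longrightarrow>
     det (sq (\<lambda>i j. ent k V E (L!i) (L!j)) (length L)) = dform k (card V - k) \<and>
     det (sq (bord (\<lambda>i j. ent k V E (L!i) (L!j))) (Suc (length L))) = bform k (card V - k)"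
    using step.IH[OF k1] by auto
  define E' where "E' = E \<union> {{x, c} |c. c \<in> C}"
  have cn': "conn k (insert x V) E'" unfolding E'_def by (rule conn_new[OF k1 xV EV C cn])
  have kcn: "kcliques k (insert x V) E' = kcliques k V E \<union> nu x C ` C"
    unfolding kcliques_def E'_def using Lk[OF k1 xV EV C cn] by auto
  obtain Lo where Lo: "distinct Lo" "set Lo = kcliques k V E"
    using kcliques_fin[OF kt] finite_distinct_list by metis
  have finC: "finite C" "card C = k" using C by (auto simp: is_mclique_def)
  obtain cl where cl: "distinct cl" "set cl = C" using finC(1) finite_distinct_list by metis
  define L0 where "L0 = Lo @ map (nu x C) cl"
  have oldc: "is_mclique k V E S" if "S \<in> set Lo" for S using that Lo(2) by (simp add: kcliques_def)
  have xnot: "x \<notin> S" if "S \<in> set Lo" for S using oldc[OF that] xV by (auto simp: is_mclique_def is_clique_def)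
  have dL0: "distinct L0"
    unfolding L0_def distinct_append
  proof (intro conjI)
    show "distinct Lo" by fact
    show "distinct (map (nu x C) cl)" using cl nu_inj[OF xV EV C] by (auto simp: distinct_map inj_on_def)
    show "set Lo \<inter> set (map (nu x C) cl) = {}" using xnot x_nu[OF xV EV C] by auto
  qed
  have sL0: "set L0 = kcliques k (insert x V) E'" unfolding L0_def kcn using Lo cl by auto
  define N where "N = length Lo"
  have lcl: "length cl = k" using distinct_card[OF cl(1)] cl(2) finC by simp
  have lL0: "length L0 = N + k" unfolding L0_def N_def using lcl by simp
  have "C \<in> set Lo" using Lo C by (simp add: kcliques_def)
  then obtain p where p: "p < N" "Lo ! p = C" unfolding N_def by (metis in_set_conv_nth)
  define f where "f i j = ent k V E (Lo!i) (Lo!j)" for i j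
  have L0o: "L0 ! i = Lo ! i" if "i < N" for i using that unfolding L0_def N_def by (simp add: nth_append)
  have L0n: "L0 ! i = nu x C (cl ! (i - N))" "cl ! (i - N) \<in> C" if "N \<le> i" "i < N + k" for i
    using that lcl cl(2) unfolding L0_def N_def by (auto simp: nth_append)
  have Loc: "is_mclique k V E (Lo ! i)" if "i < N" for i using oldc that unfolding N_def by simp
  have key: "ent k (insert x V) E' (L0!i) (L0!j) = ext f N p i j" if ij: "i < N + k" "j < N + k" for i j
  proof (cases "i < N")
    case iN: True
    show ?thesis
    proof (cases "j < N")
      case True
      then show ?thesis using iN unfolding E'_def
        by (simp add: L0o ext_def f_def ent_def d_old[OF k1 xV EV C cn Loc Loc])
    next
      case False
      have "x \<notin> Lo ! i" using xnot[of "Lo ! i"] iN unfolding N_def by simp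
      then have ne: "Lo ! i \<noteq> nu x C (cl ! (j - N))" using x_nu[OF xV EV C] by blast
      show ?thesis using iN False ij ne unfolding E'_def
        by (simp add: L0o L0n ext_def f_def ent_def p d_old_new[OF k1 xV EV C cn L0n(2) Loc] kdist_refl[OF C])
    qed
  next
    case iN: False
    show ?thesis
    proof (cases "j < N")
      case True
      have "x \<notin> Lo ! j" using xnot[of "Lo ! j"] True unfolding N_def by simp
      then have ne: "nu x C (cl ! (i - N)) \<noteq> Lo ! j" using x_nu[OF xV EV C] by blast
      show ?thesis using iN True ij ne unfolding E'_def
        by (simp add: L0o L0n ext_def f_def ent_def p d_new_old[OF k1 xV EV C cn L0n(2) Loc] kdist_refl[OF C] kdist_refl[OF Loc[OF True]])
    next
      case jN: False
      show ?thesis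
      proof (cases "i = j")
        case True
        then show ?thesis using iN by (simp add: ent_def ext_def)
      next
        case False
        have cne: "cl ! (i - N) \<noteq> cl ! (j - N)" using False iN jN ij cl(1) lcl by (simp add: nth_eq_iff_index_eq)
        have ci: "cl ! (i - N) \<in> C" and cj: "cl ! (j - N) \<in> C" using L0n(2) iN jN ij by (auto simp: not_less)
        have ne: "nu x C (cl ! (i - N)) \<noteq> nu x C (cl ! (j - N))"
          using nu_inj[OF xV EV C ci cj] cne by blast
        have d1: "kdist k (insert x V) E' (nu x C (cl ! (i - N))) (nu x C (cl ! (j - N))) = 1"
          unfolding E'_def by (rule d_new_new[OF k1 xV EV C cn ci cj cne])
        have "L0 ! i = nu x C (cl ! (i - N))" "L0 ! j = nu x C (cl ! (j - N))" using L0n(1) iN jN ij by (auto simp: not_less)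
        then show ?thesis using iN jN ne False d1 by (simp add: ext_def ent_def)
      qed
    qed
  qed
  have eqD: "sq (\<lambda>i j. ent k (insert x V) E' (L0!i) (L0!j)) (length L0) = sq (ext f N p) (N + k)"
    unfolding lL0 by (rule sq_cong) (rule key)
  have eqB: "sq (bord (\<lambda>i j. ent k (insert x V) E' (L0!i) (L0!j))) (Suc (length L0)) = sq (bord (ext f N p)) (Suc (N + k))"
    unfolding lL0 by (rule sq_cong) (auto simp: bord_def key)
  have fpp: "f p p = 0" by (simp add: f_def ent_def)
  have IHo: "det (sq f N) = dform k (card V - k)" "det (sq (bord f) (Suc N)) = bform k (card V - k)"
    using IH[OF Lo] unfolding f_def N_def by auto
  have cardn: "card (insert x V) - k = Suc (card V - k)" using props xV by simp
  note blk = block_det[of p N f k, OF p(1) fpp]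
  show ?case
  proof (intro conjI allI impI)
    show "conn k (insert x V) (E \<union> {{x, c} |c. c \<in> C})" using cn' unfolding E'_def .
    fix L assume L: "distinct L \<and> set L = kcliques k (insert x V) (E \<union> {{x, c} |c. c \<in> C})"
    have L': "distinct L" "set L = set L0" using L sL0 unfolding E'_def by auto
    have "det (sq (\<lambda>i j. ent k (insert x V) E' (L!i) (L!j)) (length L)) =
          det (sq (\<lambda>i j. ent k (insert x V) E' (L0!i) (L0!j)) (length L0))"
      by (rule list_perm[OF L'(1) dL0 L'(2)])
    also have "\<dots> = dform k (card (insert x V) - k)"
      unfolding eqD using blk IHo cardn dform_step by simp
    finally show "det (sq (\<lambda>i j. ent k (insert x V) (E \<union> {{x, c} |c. c \<in> C}) (L!i) (L!j)) (length L)) = dform k (card (insert x V) - k)"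
      unfolding E'_def .
    have "det (sq (bord (\<lambda>i j. ent k (insert x V) E' (L!i) (L!j))) (Suc (length L))) =
          det (sq (bord (\<lambda>i j. ent k (insert x V) E' (L0!i) (L0!j))) (Suc (length L0)))"
      by (rule bord_perm[OF L'(1) dL0 L'(2)])
    also have "\<dots> = bform k (card (insert x V) - k)"
      unfolding eqB using blk IHo cardn bform_step by simp
    finally show "det (sq (bord (\<lambda>i j. ent k (insert x V) (E \<union> {{x, c} |c. c \<in> C}) (L!i) (L!j))) (Suc (length L))) = bform k (card (insert x V) - k)"
      unfolding E'_def .
  qed
qed

theorem mainTheorem3:
  fixes k n :: nat and V :: "'a set" and E :: "'a set set" and cs :: "'a set list"
  assumes "k \<ge> 1" and "n \<ge> k + 2"
    and "ktree k V E" and "card V = n"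
    and "distinct cs" and "set cs = kcliques k V E"
  shows "det (kdist_matrix k V E cs)
         = (-1) ^ (k * (n - k)) * int k * (int k + 1) ^ (n - k - 1) * int (n - k)"
proof -
  have "det (sq (\<lambda>i j. ent k V E (cs!i) (cs!j)) (length cs)) = dform k (card V - k)"
    using main_ind[OF assms(3) assms(1)] assms(5,6) by blast
  then show ?thesis using kdm[OF assms(5)] assms(4) by (simp add: dform_def)
qed

end
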